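(* For any $\varepsilon\in(0,1)$ there exists an infinite $\varepsilon$-synchronization string over an alphabet of size $\Theta(1/\varepsilon^4)$, i.e., an infinite sequence $S=s_1s_2s_3\cdots$ over such an alphabet with $\mathrm{ED}(S[i,j),S[j,k))>(1-\varepsilon)(k-i)$ for all positive integers $i<j<k$.
   Context: $\mathrm{ED}$ is the minimum number of insertions and deletions transforming one string into another. $S[i,j)$ denotes the consecutive substring $s_i s_{i+1}\cdots s_{j-1}$. *)

theory Defs
  imports Complex_Main
begin

definition indel_step :: "'a list \<Rightarrow> 'a list \<Rightarrow> bool" where
  "indel_step xs ys \<longleftrightarrow>
     (\<exists>us vs a. xs = us @ a # vs \<and> ys = us @ vs) \<or>
     (\<exists>us vs a. xs = us @ vs \<and> ys = us @ a # vs)"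

definition ED :: "'a list \<Rightarrow> 'a list \<Rightarrow> nat" where
  "ED xs ys = (LEAST n. (indel_step ^^ n) xs ys)"

text \<open>S[i,j) = s_i ... s_{j-1} for an infinite string S = s_1 s_2 ... (index 0 unused).\<close>
definition substr :: "(nat \<Rightarrow> 'a) \<Rightarrow> nat \<Rightarrow> nat \<Rightarrow> 'a list" where
  "substr S i j = map S [i..<j]"

end

theory Submission
  imports Defs "HOL-Library.Sublist"
begin


lemma del_seq: "(indel_step ^^ length x) x []"
proof (induction x)
  case Nil then show ?case by simp
next
  case (Cons a x)
  have "indel_step (a#x) x" unfolding indel_step_def by (metis append_Nil)
  then show ?case using Cons relpowp_Suc_I2 by fastforce
qed

lemma ins_seq: "(indel_step ^^ length y) [] y"
proof (induction y)
  case Nil then show ?case by simp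
next
  case (Cons a y)
  have "indel_step y (a#y)" unfolding indel_step_def by (metis append_Nil)
  then show ?case using Cons relpowp_Suc_I by fastforce
qed

lemma ED_path: "(indel_step ^^ ED x y) x y"
proof -
  have "(indel_step ^^ (length x + length y)) x y"
    using del_seq[of x] ins_seq[of y] by (auto simp: relpowp_add)
  then show ?thesis unfolding ED_def by (rule LeastI)
qed

lemma subseq_remove:
  "subseq z' (us @ a # vs) \<Longrightarrow> \<exists>z. subseq z z' \<and> subseq z (us @ vs) \<and> length z' \<le> length z + 1"
proof (induction us arbitrary: z')
  case Nil
  show ?case
  proof (cases "subseq z' vs")
    case True then show ?thesis by auto
  next
    case False
    with Nil obtain z'' where "z' = a # z''" "subseq z'' vs"
      by (cases z') (auto split: if_splits)
    then show ?thesis by (intro exI[of _ z'']) auto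
  qed
next
  case (Cons b us)
  show ?case
  proof (cases "subseq z' (us @ a # vs)")
    case True
    from Cons.IH[OF this] obtain z where "subseq z z'" "subseq z (us @ vs)" "length z' \<le> length z + 1" by blast
    then show ?thesis by (intro exI[of _ z]) auto
  next
    case False
    with Cons.prems obtain z'' where z: "z' = b # z''" "subseq z'' (us @ a # vs)"
      by (cases z') (auto split: if_splits)
    from Cons.IH[OF z(2)] obtain z where "subseq z z''" "subseq z (us @ vs)" "length z'' \<le> length z + 1" by blast
    then show ?thesis using z by (intro exI[of _ "b#z"]) auto
  qed
qed

lemma ED_subseq:
  "(indel_step ^^ d) x y \<Longrightarrow> \<exists>z. subseq z x \<and> subseq z y \<and> length x + length y \<le> d + 2 * length z"
proof (induction d arbitrary: x)
  case 0 then show ?case by (intro exI[of _ x]) auto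
next
  case (Suc d)
  from relpowp_Suc_D2[OF Suc.prems] obtain w where w: "indel_step x w" "(indel_step ^^ d) w y" by blast
  from Suc.IH[OF w(2)] obtain z' where z': "subseq z' w" "subseq z' y" "length w + length y \<le> d + 2 * length z'" by blast
  from w(1) show ?case unfolding indel_step_def
  proof (elim disjE exE conjE)
    fix us vs a assume h: "x = us @ a # vs" "w = us @ vs"
    have "subseq w x" using h by (auto intro: list_emb_append_mono)
    then have "subseq z' x" using z' subseq_order.trans by blast
    then show ?thesis using z' h by (intro exI[of _ z']) auto
  next
    fix us vs a assume h: "x = us @ vs" "w = us @ a # vs"
    from subseq_remove[of z' us a vs] z' h obtain z where
      "subseq z z'" "subseq z x" "length z' \<le> length z + 1" by auto
    then show ?thesis using z' h subseq_order.trans by (intro exI[of _ z]) auto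
  qed
qed



definition Lr :: "nat \<Rightarrow> nat \<Rightarrow> nat" where "Lr r m = (m + 2*r - 1) div (2*r)"

definition mP :: "nat list \<Rightarrow> nat set \<Rightarrow> nat \<Rightarrow> bool" where
  "mP v P l \<longleftrightarrow> (\<forall>t<l. v ! (sorted_list_of_set P ! t) = v ! (sorted_list_of_set P ! (t + l)))"

definition badw :: "nat \<Rightarrow> nat list \<Rightarrow> bool" where
  "badw r v \<longleftrightarrow> (\<exists>P. P \<subseteq> {0..<length v} \<and> card P = 2 * Lr r (length v) \<and> mP v P (Lr r (length v)))"

lemma Lr_ge: "r > 0 \<Longrightarrow> m \<le> 2 * r * Lr r m"
  unfolding Lr_def
proof -
  assume r: "r > 0"
  have "m + 2*r - 1 = 2*r * ((m + 2*r - 1) div (2*r)) + (m + 2*r - 1) mod (2*r)" by simp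
  moreover have "(m + 2*r - 1) mod (2*r) < 2*r" using r by simp
  ultimately show "m \<le> 2 * r * ((m + 2 * r - 1) div (2 * r))" by linarith
qed

lemma Lr_le: "r > 0 \<Longrightarrow> m \<le> 2 * r * l \<Longrightarrow> Lr r m \<le> l"
  unfolding Lr_def
proof -
  assume r: "r > 0" and h: "m \<le> 2 * r * l"
  have "m + 2*r - 1 < 2*r*(Suc l)" using h r by simp
  then have "(m + 2*r - 1) div (2*r) < Suc l"
    by (metis less_mult_imp_div_less mult.commute)
  then show "(m + 2 * r - 1) div (2 * r) \<le> l" by simp
qed

lemma subseq_idx:
  "subseq z x \<Longrightarrow> \<exists>ix. length ix = length z \<and> sorted_wrt (<) ix \<and> (\<forall>i\<in>set ix. i < length x)
     \<and> (\<forall>t<length z. x ! (ix ! t) = z ! t)"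
proof (induction z x rule: list_emb.induct)
  case (list_emb_Nil ys) then show ?case by (intro exI[of _ "[]"]) auto
next
  case (list_emb_Cons xs ys y)
  then obtain ix where h: "length ix = length xs" "sorted_wrt (<) ix" "\<forall>i\<in>set ix. i < length ys"
     "\<forall>t<length xs. ys ! (ix ! t) = xs ! t" by blast
  show ?case using h by (intro exI[of _ "map Suc ix"]) (auto simp: sorted_wrt_map)
next
  case (list_emb_Cons2 x y xs ys)
  then obtain ix where h: "length ix = length xs" "sorted_wrt (<) ix" "\<forall>i\<in>set ix. i < length ys"
     "\<forall>t<length xs. ys ! (ix ! t) = xs ! t" by blast
  show ?case using h list_emb_Cons2 by (intro exI[of _ "0 # map Suc ix"])
      (auto simp: sorted_wrt_map nth_Cons split: nat.splits)
qed

lemma sorted_take: "sorted_wrt R xs \<Longrightarrow> sorted_wrt R (take n xs)"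
  by (metis sorted_wrt_take)

lemma common_bad:
  assumes r: "r > 0" and zx: "subseq z x" and zy: "subseq z y"
    and len: "length x + length y \<le> 2 * r * length z"
  shows "badw r (x @ y)"
proof -
  define l where "l = Lr r (length (x @ y))"
  have lz: "l \<le> length z" using Lr_le[OF r] len unfolding l_def by simp
  obtain ix where i: "length ix = length z" "sorted_wrt (<) ix" "\<forall>i\<in>set ix. i < length x"
     "\<forall>t<length z. x ! (ix ! t) = z ! t" using subseq_idx[OF zx] by blast
  obtain js where j: "length js = length z" "sorted_wrt (<) js" "\<forall>i\<in>set js. i < length y"
     "\<forall>t<length z. y ! (js ! t) = z ! t" using subseq_idx[OF zy] by blast
  define ps where "ps = take l ix @ map (\<lambda>j. j + length x) (take l js)"
  have lps: "length ps = 2 * l" using i j lz unfolding ps_def by simp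
  have sps: "sorted_wrt (<) ps" unfolding ps_def using i j
    by (auto simp: sorted_wrt_append sorted_wrt_map sorted_take dest!: in_set_takeD)
  have fin: "finite (set ps)" by simp
  have eq: "sorted_list_of_set (set ps) = ps"
    using sps by (metis sorted_list_of_set.strict_sorted_key_list_of_set
      sorted_list_of_set.set_sorted_key_list_of_set fin strict_sorted_equal)
  have dps: "distinct ps" using sps strict_sorted_iff by blast
  show ?thesis unfolding badw_def
  proof (intro exI[of _ "set ps"] conjI)
    show "set ps \<subseteq> {0..<length (x @ y)}" unfolding ps_def using i j
      by (force dest!: in_set_takeD)
    show "card (set ps) = 2 * Lr r (length (x @ y))" using lps dps distinct_card l_def by metis
    show "mP (x @ y) (set ps) (Lr r (length (x @ y)))" unfolding mP_def eq l_def[symmetric]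
    proof (intro allI impI)
      fix t assume t: "t < l"
      have a: "ps ! t = ix ! t" using t i lz unfolding ps_def by (simp add: nth_append)
      have b: "ps ! (t + l) = js ! t + length x" using t j i lz unfolding ps_def by (simp add: nth_append)
      have "ix ! t < length x" using i t lz by (metis nth_mem order_less_le_trans)
      then show "(x @ y) ! (ps ! t) = (x @ y) ! (ps ! (t + l))" using a b i j t lz
        by (simp add: nth_append)
    qed
  qed
qed



lemma sl_facts:
  fixes P :: "nat set" assumes "P \<subseteq> {0..<m}" "card P = 2 * l"
  shows "length (sorted_list_of_set P) = 2 * l" "set (sorted_list_of_set P) = P"
    "sorted_wrt (<) (sorted_list_of_set P)" "finite P"
proof -
  show f: "finite P" by (rule finite_subset[OF assms(1)]) simp
  show "length (sorted_list_of_set P) = 2 * l" using assms(2) by simp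
  show "set (sorted_list_of_set P) = P" using f by simp
  show "sorted_wrt (<) (sorted_list_of_set P)" using f
    by simp
qed
lemma count_bad:
  fixes A :: "nat set"
  assumes fA: "finite A"
  shows "card {v. length v = m \<and> set v \<subseteq> A \<and> (\<exists>P. P \<subseteq> {0..<m} \<and> card P = 2*l \<and> mP v P l)}
    \<le> (m choose (2*l)) * card A ^ (m - l)"
proof -
  define Bm where "Bm = {v. length v = m \<and> set v \<subseteq> A \<and> (\<exists>P. P \<subseteq> {0..<m} \<and> card P = 2*l \<and> mP v P l)}"
  define key where "key v = (SOME P. P \<subseteq> {0..<m} \<and> card P = 2*l \<and> mP v P l)" for v
  define Y where "Y (P::nat set) = set (drop l (sorted_list_of_set P))" for P
  define enc where "enc v = (key v, map (nth v) (sorted_list_of_set ({0..<m} - Y (key v))))" for v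
  define Keys where "Keys = {P. P \<subseteq> {0..<m} \<and> card P = 2*l}"
  define Us where "Us = {u. set u \<subseteq> A \<and> length u = m - l}"
  have keyP: "key v \<subseteq> {0..<m} \<and> card (key v) = 2*l \<and> mP v (key v) l" if "v \<in> Bm" for v
    using that unfolding Bm_def key_def by (metis (mono_tags, lifting) mem_Collect_eq someI)
  have Ysub: "Y P \<subseteq> P" for P
  proof (cases "finite P")
    case True then show ?thesis unfolding Y_def using set_drop_subset by fastforce
  next
    case False then show ?thesis unfolding Y_def by simp
  qed
  have cardY: "card (Y P) = l" if "P \<subseteq> {0..<m}" "card P = 2*l" for P
  proof -
    have "distinct (drop l (sorted_list_of_set P))" by simp
    then show ?thesis unfolding Y_def using distinct_card sl_facts[OF that] by fastforce
  qed
  have inY: "\<exists>t<l. p = sorted_list_of_set P ! (t + l)" if "P \<subseteq> {0..<m}" "card P = 2*l" "p \<in> Y P" for P p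
  proof -
    note s = sl_facts[OF that(1,2)]
    from that(3) obtain i where "i < length (drop l (sorted_list_of_set P))" "p = drop l (sorted_list_of_set P) ! i"
      unfolding Y_def by (metis in_set_conv_nth)
    then show ?thesis using s by (intro exI[of _ i]) (auto simp: add.commute)
  qed
  have encin: "enc v \<in> Keys \<times> Us" if "v \<in> Bm" for v
  proof -
    note k = keyP[OF that]
    have ys: "Y (key v) \<subseteq> {0..<m}" using Ysub[of "key v"] k by blast
    have cy: "card (Y (key v)) = l" using cardY k by blast
    have "card ({0..<m} - Y (key v)) = m - l"
      using card_Diff_subset[OF finite_subset[OF ys] ys] cy by simp
    moreover have "set (map (nth v) (sorted_list_of_set ({0..<m} - Y (key v)))) \<subseteq> A"
      using that unfolding Bm_def by auto
    ultimately show ?thesis using k unfolding enc_def Keys_def Us_def by auto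
  qed
  have inj: "inj_on enc Bm"
  proof (rule inj_onI)
    fix v v' assume v: "v \<in> Bm" and v': "v' \<in> Bm" and e: "enc v = enc v'"
    define P where "P = key v"
    have kk: "key v' = P" using e unfolding enc_def P_def by simp
    have u: "map (nth v) (sorted_list_of_set ({0..<m} - Y P)) = map (nth v') (sorted_list_of_set ({0..<m} - Y P))"
      using e unfolding enc_def P_def kk by simp
    note k = keyP[OF v, folded P_def] and k' = keyP[OF v', unfolded kk]
    note s = sl_facts[of P m l]
    have "\<forall>p. p < m \<longrightarrow> v ! p = v' ! p"
    proof (intro allI)
      fix p show "p < m \<longrightarrow> v ! p = v' ! p"
      proof (induction p rule: less_induct)
        case (less p)
        show ?case
        proof
          assume pm: "p < m"
          show "v ! p = v' ! p"
          proof (cases "p \<in> Y P")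
            case True
            then obtain t where t: "t < l" "p = sorted_list_of_set P ! (t + l)" using inY k by blast
            have lt: "sorted_list_of_set P ! t < p"
              using t(2) sorted_wrt_nth_less[OF s(3)[OF conjunct1[OF k] conjunct1[OF conjunct2[OF k]]], of t "t+l"]
                s(1)[OF conjunct1[OF k] conjunct1[OF conjunct2[OF k]]] t(1) by simp
            have tm: "sorted_list_of_set P ! t < m" using lt pm by simp
            have "v ! p = v ! (sorted_list_of_set P ! t)" using k t unfolding mP_def by simp
            also have "\<dots> = v' ! (sorted_list_of_set P ! t)" using less lt tm by blast
            also have "\<dots> = v' ! p" using k' t unfolding mP_def by simp
            finally show ?thesis .
          next
            case False
            then have "p \<in> set (sorted_list_of_set ({0..<m} - Y P))" using pm by simp
            then obtain i where i: "i < length (sorted_list_of_set ({0..<m} - Y P))"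
               "p = sorted_list_of_set ({0..<m} - Y P) ! i" by (metis in_set_conv_nth)
            show ?thesis using arg_cong[OF u, of "\<lambda>xs. xs ! i"] i by simp
          qed
        qed
      qed
    qed
    moreover have "length v = m" "length v' = m" using v v' unfolding Bm_def by auto
    ultimately show "v = v'" by (metis nth_equalityI)
  qed
  have finK: "finite Keys" unfolding Keys_def by simp
  have finU: "finite Us" unfolding Us_def using finite_lists_length_eq[OF fA] by simp
  have "card Bm \<le> card (Keys \<times> Us)"
    using card_inj_on_le[OF inj] encin finK finU by blast
  also have "\<dots> = (m choose (2*l)) * card A ^ (m - l)"
    unfolding card_cartesian_product Keys_def Us_def
    using n_subsets[of "{0..<m}" "2*l"] card_lists_length_eq[OF fA] by simp
  finally show ?thesis unfolding Bm_def .
qed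



definition qq :: "nat \<Rightarrow> nat" where "qq r = 512 * r^4"

definition good :: "nat \<Rightarrow> nat list \<Rightarrow> bool" where
  "good r w \<longleftrightarrow> (\<forall>a c. a < c \<and> c \<le> length w \<longrightarrow> \<not> badw r (drop a (take c w)))"

definition Gs :: "nat \<Rightarrow> nat \<Rightarrow> nat list set" where
  "Gs r n = {w. length w = n \<and> set w \<subseteq> {0..<qq r} \<and> good r w}"

definition Bad :: "nat \<Rightarrow> nat \<Rightarrow> nat list set" where
  "Bad r m = {v. length v = m \<and> set v \<subseteq> {0..<qq r} \<and> badw r v}"

lemma good_take: "good r w \<Longrightarrow> good r (take n w)"
  unfolding good_def by (auto simp: min_def split: if_splits)

lemma finite_Gs: "finite (Gs r n)"
proof -
  have "Gs r n \<subseteq> {xs. set xs \<subseteq> {0..<qq r} \<and> length xs = n}" unfolding Gs_def by auto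
  then show ?thesis using finite_lists_length_eq[of "{0..<qq r}" n] finite_subset by blast
qed

lemma finite_Bad: "finite (Bad r n)"
proof -
  have "Bad r n \<subseteq> {xs. set xs \<subseteq> {0..<qq r} \<and> length xs = n}" unfolding Bad_def by auto
  then show ?thesis using finite_lists_length_eq[of "{0..<qq r}" n] finite_subset by blast
qed

lemma card_Bad: "card (Bad r m) \<le> (m choose (2 * Lr r m)) * qq r ^ (m - Lr r m)"
proof -
  have "Bad r m \<subseteq> {v. length v = m \<and> set v \<subseteq> {0..<qq r} \<and>
      (\<exists>P. P \<subseteq> {0..<m} \<and> card P = 2 * Lr r m \<and> mP v P (Lr r m))}"
    unfolding Bad_def badw_def by auto
  then have "card (Bad r m) \<le> card {v. length v = m \<and> set v \<subseteq> {0..<qq r} \<and>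
      (\<exists>P. P \<subseteq> {0..<m} \<and> card P = 2 * Lr r m \<and> mP v P (Lr r m))}"
    by (rule card_mono[rotated]) (rule finite_subset[OF _ finite_lists_length_eq[of "{0..<qq r}" m]], auto)
  also have "\<dots> \<le> (m choose (2 * Lr r m)) * card {0..<qq r} ^ (m - Lr r m)"
    by (rule count_bad) simp
  finally show ?thesis by simp
qed

lemma step_incl:
  assumes w: "w \<in> Gs r n" and x: "x < qq r"
  shows "w @ [x] \<in> Gs r (Suc n) \<union>
     (\<Union>m\<in>{1..Suc n}. (\<lambda>(u,v). u @ v) ` (Gs r (Suc n - m) \<times> Bad r m))"
proof (cases "good r (w @ [x])")
  case True then show ?thesis using w x unfolding Gs_def by auto
next
  case False
  then obtain a c where ac: "a < c" "c \<le> Suc n" "badw r (drop a (take c (w @ [x])))"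
    using w unfolding good_def Gs_def by auto
  have gw: "good r w" "length w = n" "set w \<subseteq> {0..<qq r}" using w unfolding Gs_def by auto
  have cn: "c = Suc n"
  proof (rule ccontr)
    assume "c \<noteq> Suc n"
    then have "c \<le> n" using ac by simp
    then have "take c (w @ [x]) = take c w" using gw by simp
    then show False using gw(1) ac gw(2) \<open>c \<le> n\<close> unfolding good_def by auto
  qed
  define m where "m = Suc n - a"
  have m: "m \<in> {1..Suc n}" "Suc n - m = a" using ac cn unfolding m_def by auto
  have u: "take a w \<in> Gs r a" using good_take[OF gw(1)] gw ac cn unfolding Gs_def
    by (auto dest: in_set_takeD)
  have v: "drop a (w @ [x]) \<in> Bad r m" using ac cn gw x unfolding Bad_def m_def
    by (auto dest: in_set_dropD)
  have e: "w @ [x] = take a w @ drop a (w @ [x])" using ac cn gw by simp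
  have "(take a w, drop a (w @ [x])) \<in> Gs r (Suc n - m) \<times> Bad r m" using m u v by simp
  then have "w @ [x] \<in> (\<lambda>(u,v). u @ v) ` (Gs r (Suc n - m) \<times> Bad r m)"
    using e by (metis (no_types, lifting) case_prod_conv image_eqI)
  then show ?thesis by (intro UnI2 UN_I[OF m(1)])
qed

lemma step_card:
  "qq r * card (Gs r n) \<le> card (Gs r (Suc n)) + (\<Sum>m\<in>{1..Suc n}. card (Gs r (Suc n - m)) * card (Bad r m))"
proof -
  define Ext where "Ext = (\<lambda>(w,x). w @ [x]) ` (Gs r n \<times> {0..<qq r})"
  have inj: "inj_on (\<lambda>(w,x). w @ [x]) (Gs r n \<times> {0..<qq r})"
    by (auto simp: inj_on_def)
  have cE: "card Ext = card (Gs r n) * qq r"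
    unfolding Ext_def using card_image[OF inj] by (simp add: card_cartesian_product)
  have sub: "Ext \<subseteq> Gs r (Suc n) \<union> (\<Union>m\<in>{1..Suc n}. (\<lambda>(u,v). u @ v) ` (Gs r (Suc n - m) \<times> Bad r m))"
  proof
    fix e assume "e \<in> Ext"
    then obtain w x where "w \<in> Gs r n" "x < qq r" "e = w @ [x]" unfolding Ext_def by auto
    then show "e \<in> Gs r (Suc n) \<union> (\<Union>m\<in>{1..Suc n}. (\<lambda>(u,v). u @ v) ` (Gs r (Suc n - m) \<times> Bad r m))"
      using step_incl by blast
  qed
  have fin2: "finite (\<Union>m\<in>{1..Suc n}. (\<lambda>(u,v). u @ v) ` (Gs r (Suc n - m) \<times> Bad r m))"
    using finite_Gs finite_Bad by auto
  have "card Ext \<le> card (Gs r (Suc n) \<union> (\<Union>m\<in>{1..Suc n}. (\<lambda>(u,v). u @ v) ` (Gs r (Suc n - m) \<times> Bad r m)))"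
    using card_mono[OF _ sub] finite_Gs fin2 by blast
  also have "\<dots> \<le> card (Gs r (Suc n)) + card (\<Union>m\<in>{1..Suc n}. (\<lambda>(u,v). u @ v) ` (Gs r (Suc n - m) \<times> Bad r m))"
    by (rule card_Un_le)
  also have "card (\<Union>m\<in>{1..Suc n}. (\<lambda>(u,v). u @ v) ` (Gs r (Suc n - m) \<times> Bad r m))
      \<le> (\<Sum>m\<in>{1..Suc n}. card ((\<lambda>(u,v). u @ v) ` (Gs r (Suc n - m) \<times> Bad r m)))"
    by (rule card_UN_le) simp
  also have "\<dots> \<le> (\<Sum>m\<in>{1..Suc n}. card (Gs r (Suc n - m)) * card (Bad r m))"
    by (rule sum_mono) (metis card_image_le card_cartesian_product finite_Gs finite_Bad finite_cartesian_product)
  finally show ?thesis using cE by (simp add: mult.commute)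
qed

lemma chain:
  fixes g :: "nat \<Rightarrow> real" and b :: real
  assumes "b \<ge> 0" "\<forall>k<n. b * g k \<le> g (Suc k)" "\<forall>k. g k \<ge> 0" "j \<le> n"
  shows "b ^ (n - j) * g j \<le> g n"
  using assms
proof (induction n)
  case 0 then show ?case by simp
next
  case (Suc n)
  show ?case
  proof (cases "j = Suc n")
    case True then show ?thesis by simp
  next
    case False
    then have "j \<le> n" using Suc by simp
    then have h: "b ^ (n - j) * g j \<le> g n" using Suc by simp
    have "b ^ (Suc n - j) * g j = b * (b ^ (n - j) * g j)" using \<open>j \<le> n\<close>
      by (simp add: Suc_diff_le)
    also have "\<dots> \<le> b * g n" using h Suc.prems(1) by (simp add: mult_left_mono)
    also have "\<dots> \<le> g (Suc n)" using Suc.prems(2) by simp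
    finally show ?thesis .
  qed
qed



lemma exp1_le4: "exp (1::real) \<le> 4"
proof -
  have "exp (1/2::real) \<le> 1 + 2 * (1/2)" by (rule real_exp_bound_lemma) auto
  then have h: "exp (1/2::real) \<le> 2" by simp
  have "exp (1::real) = exp (1/2) * exp (1/2)" by (simp flip: exp_add)
  also have "\<dots> \<le> 2 * 2" using h by (intro mult_mono) auto
  finally show ?thesis by simp
qed

lemma kk_fact: "real k ^ k \<le> 4 ^ k * fact k"
proof (induction k)
  case 0 then show ?case by simp
next
  case (Suc k)
  have a: "real (Suc k) ^ k \<le> 4 * real k ^ k"
  proof (cases "k = 0")
    case True then show ?thesis by simp
  next
    case False
    then have "(1 + 1 / real k) ^ k \<le> exp 1"
      using exp_ge_one_plus_x_over_n_power_n[where x=1 and n=k] False by simp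
    also have "\<dots> \<le> 4" by (rule exp1_le4)
    finally have "(1 + 1 / real k) ^ k \<le> 4" .
    moreover have "real (Suc k) ^ k = real k ^ k * (1 + 1 / real k) ^ k"
      using False by (simp add: power_mult_distrib[symmetric] field_simps)
    ultimately show ?thesis
      by (metis mult.commute mult_left_mono zero_le_power of_nat_0_le_iff)
  qed
  have "real (Suc k) ^ Suc k = real (Suc k) * real (Suc k) ^ k" by simp
  also have "\<dots> \<le> real (Suc k) * (4 * real k ^ k)" using a by (intro mult_left_mono) auto
  also have "\<dots> \<le> real (Suc k) * (4 * (4 ^ k * fact k))" using Suc.IH by (intro mult_left_mono) auto
  also have "\<dots> = 4 ^ Suc k * fact (Suc k)" by (simp add: algebra_simps)
  finally show ?case .
qed

lemma choose_bound:
  assumes "m \<le> r * k"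
  shows "real (m choose k) \<le> (4 * real r) ^ k"
proof -
  have "real (m choose k) * fact k \<le> real m ^ k"
    using binomial_fact_pow[of m k] by (metis of_nat_fact of_nat_le_iff of_nat_mult of_nat_power)
  also have "\<dots> \<le> (real r * real k) ^ k" using assms
    by (intro power_mono) (simp_all flip: of_nat_mult)
  also have "\<dots> = real r ^ k * real k ^ k" by (simp add: power_mult_distrib)
  also have "\<dots> \<le> real r ^ k * (4 ^ k * fact k)" by (intro mult_left_mono kk_fact) auto
  finally have "real (m choose k) * fact k \<le> (4 * real r) ^ k * fact k"
    by (simp add: power_mult_distrib algebra_simps)
  then show ?thesis by simp
qed

lemma theta_pow:
  assumes r: "r > 0"
  shows "(1 - 1 / (4 * real r)) ^ (2 * r) \<ge> 1/2"
proof -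
  have "1 + real (2*r) * (- 1 / (4 * real r)) \<le> (1 + (- 1 / (4 * real r))) ^ (2*r)"
    by (rule Bernoulli_inequality) (use r in \<open>simp add: field_simps\<close>)
  moreover have "1 + real (2*r) * (- 1 / (4 * real r)) = 1/2" using r by (simp add: field_simps)
  ultimately show ?thesis by simp
qed



lemma Lr_pos: "r > 0 \<Longrightarrow> m \<ge> 1 \<Longrightarrow> Lr r m \<ge> 1"
  using Lr_ge[of r m] by (cases "Lr r m") auto

lemma term_bound:
  assumes r: "r > 0" and m: "m \<ge> 1"
  defines "q \<equiv> real (qq r)" and "\<theta> \<equiv> 1 - 1 / (4 * real r)" and "L \<equiv> Lr r m"
  shows "real (m choose (2 * L)) * q ^ (m - L) / (q * \<theta>) ^ (m - 1) \<le> q * (1 / (16 * real r ^ 2)) ^ L"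
proof (cases "m choose (2 * L) = 0")
  case True
  have "q \<ge> 0" unfolding q_def by simp
  moreover from True have z: "real (m choose (2 * L)) = 0" by simp
  ultimately show ?thesis by (simp only: z) simp
next
  case False
  then have Lm: "2 * L \<le> m" by (simp add: binomial_eq_0_iff)
  have L1: "L \<ge> 1" unfolding L_def using Lr_pos[OF r m] .
  have mL: "m \<le> 2 * r * L" unfolding L_def using Lr_ge[OF r] .
  have qpos: "q > 0" unfolding q_def qq_def using r by simp
  have th0: "\<theta> > 0" "\<theta> \<le> 1" unfolding \<theta>_def using r by (auto simp: field_simps)
  define a where "a = q ^ (m - L)"
  define b where "b = q ^ (L - 1)"
  define c where "c = \<theta> ^ (m - 1)"
  have apos: "a > 0" "b > 0" "c > 0" unfolding a_def b_def c_def using qpos th0 by auto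
  have e1: "(q * \<theta>) ^ (m - 1) = a * b * c"
  proof -
    have "m - 1 = (m - L) + (L - 1)" using Lm L1 by simp
    then have "q ^ (m - 1) = a * b" unfolding a_def b_def by (metis power_add)
    then show ?thesis unfolding c_def by (simp add: power_mult_distrib)
  qed
  have e2: "q ^ L = q * b" unfolding b_def using L1 by (metis Suc_diff_le diff_Suc_1 power_Suc)
  have lhs: "real (m choose (2 * L)) * q ^ (m - L) / (q * \<theta>) ^ (m - 1)
      = real (m choose (2 * L)) * q / (q ^ L * c)"
    unfolding e1 e2 a_def[symmetric] using apos qpos by (simp add: field_simps)
  have cb: "c \<ge> (1/2) ^ L"
  proof -
    have "\<theta> ^ (2 * r * L) \<le> c" unfolding c_def using th0 mL
      by (intro power_decreasing) auto
    moreover have "\<theta> ^ (2 * r * L) = (\<theta> ^ (2 * r)) ^ L" by (simp add: power_mult)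
    moreover have "(1/2) ^ L \<le> (\<theta> ^ (2 * r)) ^ L" using theta_pow[OF r] unfolding \<theta>_def
      by (intro power_mono) auto
    ultimately show ?thesis by linarith
  qed
  have chb: "real (m choose (2 * L)) \<le> (16 * real r ^ 2) ^ L"
  proof -
    have "m \<le> r * (2 * L)" using mL by (simp add: algebra_simps)
    then have "real (m choose (2 * L)) \<le> (4 * real r) ^ (2 * L)" by (rule choose_bound)
    also have "\<dots> = ((4 * real r) ^ 2) ^ L" by (simp add: power_mult)
    also have "\<dots> = (16 * real r ^ 2) ^ L" by (simp add: power_mult_distrib)
    finally show ?thesis .
  qed
  have "real (m choose (2 * L)) * q / (q ^ L * c) \<le> (16 * real r ^ 2) ^ L * q / (q ^ L * (1/2) ^ L)"
    using chb cb qpos apos by (intro frac_le mult_right_mono mult_left_mono) auto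
  also have "\<dots> = q * ((16 * real r ^ 2) ^ L / (q * (1/2)) ^ L)"
    by (simp only: power_mult_distrib) simp
  also have "\<dots> = q * ((16 * real r ^ 2) / (q * (1/2))) ^ L"
    by (simp only: power_divide)
  also have "(16 * real r ^ 2) / (q * (1/2)) = 1 / (16 * real r ^ 2)"
    unfolding q_def qq_def using r by (simp add: field_simps power2_eq_square power4_eq_xxxx)
  finally show ?thesis using lhs by simp
qed

lemma geo_bound:
  fixes \<rho> :: real
  assumes "0 \<le> \<rho>" "\<rho> \<le> 1/2"
  shows "(\<Sum>L\<in>{1..M}. \<rho> ^ L) \<le> 2 * \<rho> - 2 * \<rho> ^ Suc M"
proof (induction M)
  case 0 then show ?case by simp
next
  case (Suc M)
  have "(\<Sum>L\<in>{1..Suc M}. \<rho> ^ L) = (\<Sum>L\<in>{1..M}. \<rho> ^ L) + \<rho> ^ Suc M" by simp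
  also have "\<dots> \<le> 2 * \<rho> - 2 * \<rho> ^ Suc M + \<rho> ^ Suc M" using Suc by simp
  also have "\<dots> \<le> 2 * \<rho> - 2 * \<rho> ^ Suc (Suc M)"
  proof -
    have "2 * \<rho> ^ Suc (Suc M) = (2 * \<rho>) * \<rho> ^ Suc M" by simp
    also have "\<dots> \<le> 1 * \<rho> ^ Suc M" using assms by (intro mult_right_mono) auto
    finally show ?thesis by simp
  qed
  finally show ?case .
qed

lemma group_bound:
  fixes \<rho> :: real
  assumes r: "r > 0" and "0 \<le> \<rho>" "\<rho> \<le> 1"
  shows "(\<Sum>m\<in>{1..2*r*M}. \<rho> ^ Lr r m) \<le> 2 * r * (\<Sum>L\<in>{1..M}. \<rho> ^ L)"
proof (induction M)
  case 0 then show ?case by simp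
next
  case (Suc M)
  have un: "{1..2*r*Suc M} = {1..2*r*M} \<union> {2*r*M+1..2*r*M + 2*r}" by auto
  have dis: "{1..2*r*M} \<inter> {2*r*M+1..2*r*M + 2*r} = {}" by auto
  have "(\<Sum>m\<in>{1..2*r*Suc M}. \<rho> ^ Lr r m) = (\<Sum>m\<in>{1..2*r*M}. \<rho> ^ Lr r m) + (\<Sum>m\<in>{2*r*M+1..2*r*M + 2*r}. \<rho> ^ Lr r m)"
    unfolding un by (rule sum.union_disjoint) (use dis in auto)
  also have "(\<Sum>m\<in>{2*r*M+1..2*r*M + 2*r}. \<rho> ^ Lr r m) \<le> (\<Sum>m\<in>{2*r*M+1..2*r*M + 2*r}. \<rho> ^ Suc M)"
  proof (rule sum_mono)
    fix m assume m: "m \<in> {2*r*M+1..2*r*M + 2*r}"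
    have "Suc M \<le> Lr r m"
    proof (rule ccontr)
      assume "\<not> Suc M \<le> Lr r m"
      then have "Lr r m \<le> M" by simp
      then have "2 * r * Lr r m \<le> 2 * r * M" by simp
      then have "m \<le> 2 * r * M" using Lr_ge[OF r, of m] by linarith
      then show False using m by simp
    qed
    then show "\<rho> ^ Lr r m \<le> \<rho> ^ Suc M" using assms by (intro power_decreasing) auto
  qed
  also have "(\<Sum>m\<in>{2*r*M+1..2*r*M + 2*r}. \<rho> ^ Suc M) = 2 * r * \<rho> ^ Suc M" by simp
  finally show ?case using Suc.IH by (simp add: algebra_simps)
qed

lemma sum_bound:
  fixes \<rho> :: real
  assumes r: "r > 0" and "0 \<le> \<rho>" "\<rho> \<le> 1/2"
  shows "(\<Sum>m\<in>{1..N}. \<rho> ^ Lr r m) \<le> 4 * r * \<rho>"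
proof -
  have "(\<Sum>m\<in>{1..N}. \<rho> ^ Lr r m) \<le> (\<Sum>m\<in>{1..2*r*N}. \<rho> ^ Lr r m)"
    using assms r by (intro sum_mono2) auto
  also have "\<dots> \<le> 2 * r * (\<Sum>L\<in>{1..N}. \<rho> ^ L)" using group_bound[OF r, of \<rho> N] assms by simp
  also have "\<dots> \<le> 2 * r * (2 * \<rho>)"
  proof -
    have "0 \<le> \<rho> ^ Suc N" using assms by simp
    then have "(\<Sum>L\<in>{1..N}. \<rho> ^ L) \<le> 2 * \<rho>" using geo_bound[of \<rho> N] assms by linarith
    then show ?thesis by (intro mult_left_mono) auto
  qed
  finally show ?thesis by simp
qed



lemma core:
  assumes r: "r > 0"
  defines "q \<equiv> real (qq r)" and "\<beta> \<equiv> real (qq r) * (1 - 1 / (4 * real r))"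
  shows "(\<Sum>m\<in>{1..N}. real (m choose (2 * Lr r m)) * q ^ (m - Lr r m) / \<beta> ^ (m - 1)) \<le> q - \<beta>"
proof -
  define \<rho> where "\<rho> = 1 / (16 * real r ^ 2)"
  have r1: "real r ^ 2 \<ge> 1" using r by simp
  have rho: "0 \<le> \<rho>" "\<rho> \<le> 1/2" unfolding \<rho>_def using r1 by (auto simp: divide_simps)
  have "(\<Sum>m\<in>{1..N}. real (m choose (2 * Lr r m)) * q ^ (m - Lr r m) / \<beta> ^ (m - 1))
      \<le> (\<Sum>m\<in>{1..N}. q * \<rho> ^ Lr r m)"
    unfolding \<beta>_def q_def \<rho>_def using term_bound[OF r] by (intro sum_mono) auto
  also have "\<dots> = q * (\<Sum>m\<in>{1..N}. \<rho> ^ Lr r m)" by (simp add: sum_distrib_left)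
  also have "\<dots> \<le> q * (4 * r * \<rho>)" unfolding q_def using sum_bound[OF r rho]
    by (intro mult_left_mono) auto
  also have "\<dots> = q - \<beta>" unfolding \<rho>_def \<beta>_def q_def using r
    by (simp add: field_simps power2_eq_square)
  finally show ?thesis .
qed

lemma growth:
  assumes r: "r > 0"
  defines "\<beta> \<equiv> real (qq r) * (1 - 1 / (4 * real r))"
  shows "\<beta> * real (card (Gs r n)) \<le> real (card (Gs r (Suc n)))"
proof (induction n rule: less_induct)
  case (less n)
  define g where "g k = real (card (Gs r k))" for k
  define q where "q = real (qq r)"
  have bpos: "\<beta> > 0" unfolding \<beta>_def using r by (simp add: qq_def field_simps)
  have IH: "\<forall>k<n. \<beta> * g k \<le> g (Suc k)" using less unfolding g_def by blast
  have gb: "g (Suc n - m) \<le> g n / \<beta> ^ (m - 1)" if m: "m \<in> {1..Suc n}" for m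
  proof -
    have "\<beta> ^ (n - (Suc n - m)) * g (Suc n - m) \<le> g n"
      using chain[of \<beta> n g "Suc n - m"] IH bpos m unfolding g_def by force
    moreover have "n - (Suc n - m) = m - 1" using m by auto
    ultimately show ?thesis using bpos by (simp add: field_simps)
  qed
  have st: "q * g n \<le> g (Suc n) + (\<Sum>m\<in>{1..Suc n}. g (Suc n - m) * real (card (Bad r m)))"
  proof -
    have "real (qq r * card (Gs r n)) \<le> real (card (Gs r (Suc n)) + (\<Sum>m\<in>{1..Suc n}. card (Gs r (Suc n - m)) * card (Bad r m)))"
      using step_card[of r n] by (simp only: of_nat_le_iff)
    then show ?thesis unfolding g_def q_def by (simp only: of_nat_add of_nat_mult of_nat_sum)
  qed
  have "(\<Sum>m\<in>{1..Suc n}. g (Suc n - m) * real (card (Bad r m)))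
     \<le> (\<Sum>m\<in>{1..Suc n}. (g n / \<beta> ^ (m - 1)) * (real (m choose (2 * Lr r m)) * q ^ (m - Lr r m)))"
  proof (rule sum_mono)
    fix m assume m: "m \<in> {1..Suc n}"
    have "real (card (Bad r m)) \<le> real (m choose (2 * Lr r m)) * q ^ (m - Lr r m)"
      using card_Bad[of r m] unfolding q_def by (simp flip: of_nat_mult of_nat_power)
    then show "g (Suc n - m) * real (card (Bad r m)) \<le> (g n / \<beta> ^ (m - 1)) * (real (m choose (2 * Lr r m)) * q ^ (m - Lr r m))"
      using gb[OF m] by (intro mult_mono) (auto simp: g_def)
  qed
  also have "\<dots> = g n * (\<Sum>m\<in>{1..Suc n}. real (m choose (2 * Lr r m)) * q ^ (m - Lr r m) / \<beta> ^ (m - 1))"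
    by (simp only: sum_distrib_left) (rule sum.cong, auto)
  also have "\<dots> \<le> g n * (q - \<beta>)"
    using core[OF r, of "Suc n"] unfolding q_def \<beta>_def g_def by (intro mult_left_mono) auto
  finally have "q * g n \<le> g (Suc n) + g n * (q - \<beta>)" using st by linarith
  then show ?case unfolding g_def by (simp add: algebra_simps)
qed

lemma Gs_nonempty:
  assumes r: "r > 0"
  shows "Gs r n \<noteq> {}"
proof -
  have "card (Gs r n) > 0"
  proof (induction n)
    case 0
    have "[] \<in> Gs r 0" unfolding Gs_def good_def by simp
    then show ?case using finite_Gs card_gt_0_iff by blast
  next
    case (Suc n)
    have "real (qq r) * (1 - 1 / (4 * real r)) > 0" using r by (simp add: qq_def field_simps)
    then have "0 < real (qq r) * (1 - 1 / (4 * real r)) * real (card (Gs r n))" using Suc by simp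
    also have "\<dots> \<le> real (card (Gs r (Suc n)))" by (rule growth[OF r])
    finally show ?case by simp
  qed
  then show ?thesis by auto
qed



definition extendable :: "nat \<Rightarrow> nat list \<Rightarrow> bool" where
  "extendable r w \<longleftrightarrow> (\<forall>n\<ge>length w. \<exists>v\<in>Gs r n. take (length w) v = w)"

lemma ext_nil: "r > 0 \<Longrightarrow> extendable r []"
  unfolding extendable_def using Gs_nonempty by auto

lemma ext_step:
  assumes e: "extendable r w"
  shows "\<exists>a < qq r. extendable r (w @ [a])"
proof (rule ccontr)
  assume "\<not> ?thesis"
  then have "\<forall>a<qq r. \<exists>n\<ge>Suc (length w). \<forall>v\<in>Gs r n. take (Suc (length w)) v \<noteq> w @ [a]"
    unfolding extendable_def by auto
  then obtain f where f: "\<forall>a<qq r. f a \<ge> Suc (length w) \<and> (\<forall>v\<in>Gs r (f a). take (Suc (length w)) v \<noteq> w @ [a])"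
    by metis
  define N where "N = Suc (length w) + (\<Sum>a<qq r. f a)"
  have fN: "f a \<le> N" if "a < qq r" for a
  proof -
    have "f a \<le> (\<Sum>a<qq r. f a)" using that by (intro member_le_sum) auto
    then show ?thesis unfolding N_def by simp
  qed
  have "N \<ge> length w" unfolding N_def by simp
  then obtain v where v: "v \<in> Gs r N" "take (length w) v = w" using e unfolding extendable_def by blast
  have lv: "length v = N" "set v \<subseteq> {0..<qq r}" "good r v" using v unfolding Gs_def by auto
  have wl: "length w < N" unfolding N_def by simp
  define a where "a = v ! length w"
  have a: "a < qq r" unfolding a_def using lv wl nth_mem by fastforce
  define v' where "v' = take (f a) v"
  have v': "v' \<in> Gs r (f a)" unfolding v'_def Gs_def using lv fN[OF a] good_take[OF lv(3)]
    by (auto dest: in_set_takeD)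
  have "take (Suc (length w)) v' = take (Suc (length w)) v" unfolding v'_def using f a
    by (simp add: min_def)
  also have "\<dots> = w @ [a]" using v(2) wl lv unfolding a_def by (simp add: take_Suc_conv_app_nth)
  finally show False using f a v' by blast
qed

primrec pre :: "nat \<Rightarrow> nat \<Rightarrow> nat list" where
  "pre r 0 = []"
| "pre r (Suc n) = pre r n @ [SOME a. a < qq r \<and> extendable r (pre r n @ [a])]"

lemma pre_props:
  assumes r: "r > 0"
  shows "extendable r (pre r n) \<and> length (pre r n) = n \<and> set (pre r n) \<subseteq> {0..<qq r}"
proof (induction n)
  case 0 then show ?case using ext_nil[OF r] by simp
next
  case (Suc n)
  have "\<exists>a. a < qq r \<and> extendable r (pre r n @ [a])" using ext_step Suc by blast
  then have "(SOME a. a < qq r \<and> extendable r (pre r n @ [a])) < qq r \<and>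
     extendable r (pre r n @ [SOME a. a < qq r \<and> extendable r (pre r n @ [a])])"
    by (rule someI_ex)
  then show ?case using Suc by auto
qed

lemma ext_good:
  assumes "extendable r w" shows "good r w"
proof -
  obtain v where "v \<in> Gs r (length w)" "take (length w) v = w" using assms unfolding extendable_def by blast
  then show ?thesis unfolding Gs_def by auto
qed

definition Tseq :: "nat \<Rightarrow> nat \<Rightarrow> nat" where "Tseq r i = pre r (Suc i) ! i"

lemma pre_map: "r > 0 \<Longrightarrow> pre r n = map (Tseq r) [0..<n]"
proof (induction n)
  case 0 then show ?case by simp
next
  case (Suc n)
  have "length (pre r n) = n" using pre_props[OF Suc.prems] by blast
  then show ?case using Suc by (simp add: Tseq_def nth_append)
qed

lemma T_range: "r > 0 \<Longrightarrow> Tseq r i < qq r"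
proof -
  assume r: "r > 0"
  have "Tseq r i \<in> set (pre r (Suc i))" unfolding Tseq_def using pre_props[OF r, of "Suc i"]
    by (intro nth_mem) simp
  then show ?thesis using pre_props[OF r, of "Suc i"] by auto
qed

lemma T_good:
  assumes r: "r > 0" and "a < c"
  shows "\<not> badw r (map (Tseq r) [a..<c])"
proof -
  have g: "good r (pre r c)" using pre_props[OF r] ext_good by blast
  have "drop a (take c (pre r c)) = map (Tseq r) [a..<c]"
    using pre_map[OF r, of c] by (simp add: drop_map)
  moreover have "length (pre r c) = c" using pre_props[OF r] by blast
  ultimately show ?thesis using g assms unfolding good_def by (metis order_refl)
qed



lemma sync_main:
  fixes \<epsilon> :: real
  assumes e: "0 < \<epsilon>" "\<epsilon> < 1" and r: "r > 0" and re: "1 \<le> real r * \<epsilon>"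
    and ijk: "0 < i" "i < j" "j < k"
  defines "S \<equiv> \<lambda>i. Tseq r (i - 1)"
  shows "real (ED (substr S i j) (substr S j k)) > (1 - \<epsilon>) * real (k - i)"
proof (rule ccontr)
  assume "\<not> ?thesis"
  then have dle: "real (ED (substr S i j) (substr S j k)) \<le> (1 - \<epsilon>) * real (k - i)" by simp
  have sh: "substr S a b = map (Tseq r) [a - 1..<b - 1]" if "0 < a" for a b
  proof -
    have "[a..<b] = map Suc [a - 1..<b - 1]" using that by (cases b) (simp_all add: map_Suc_upt)
    then show ?thesis unfolding substr_def S_def by simp
  qed
  define x where "x = map (Tseq r) [i - 1..<j - 1]"
  define y where "y = map (Tseq r) [j - 1..<k - 1]"
  have xy: "substr S i j = x" "substr S j k = y" using sh ijk unfolding x_def y_def by auto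
  define d where "d = ED x y"
  obtain z where z: "subseq z x" "subseq z y" "length x + length y \<le> d + 2 * length z"
    using ED_subseq[OF ED_path[of x y]] unfolding d_def by blast
  have lxy: "length x + length y = k - i" unfolding x_def y_def using ijk by simp
  have d1: "real d \<le> (1 - \<epsilon>) * real (k - i)" using dle xy unfolding d_def by simp
  have z1: "real (k - i) \<le> real d + 2 * real (length z)" using z(3) lxy
    by (metis of_nat_add of_nat_le_iff of_nat_mult of_nat_numeral)
  have "\<epsilon> * real (k - i) \<le> 2 * real (length z)" using d1 z1 by (simp add: algebra_simps)
  then have "real r * (\<epsilon> * real (k - i)) \<le> real r * (2 * real (length z))"
    by (intro mult_left_mono) auto
  moreover have "real (k - i) \<le> real r * \<epsilon> * real (k - i)" using re
    by (metis mult_le_cancel_right1 of_nat_0_le_iff order.trans mult_right_mono mult_1 linorder_not_le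
        mult_le_cancel_left1)
  ultimately have "real (k - i) \<le> real (2 * r * length z)" by (simp add: algebra_simps)
  then have "length x + length y \<le> 2 * r * length z" using lxy by linarith
  then have "badw r (x @ y)" using common_bad[OF r z(1,2)] by blast
  moreover have "x @ y = map (Tseq r) [i - 1..<k - 1]" unfolding x_def y_def using ijk
    by (metis map_append upt_add_eq_append diff_le_mono less_imp_le_nat le_add_diff_inverse)
  moreover have "i - 1 < k - 1" using ijk by simp
  ultimately show False using T_good[OF r] by metis
qed

theorem lemma20:
  shows "\<exists>c C :: real. 0 < c \<and> 0 < C \<and>
    (\<forall>\<epsilon>::real. 0 < \<epsilon> \<and> \<epsilon> < 1 \<longrightarrow>
      (\<exists>(\<Sigma>::nat set) (S::nat \<Rightarrow> nat).
         finite \<Sigma> \<and>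
         c / \<epsilon> ^ 4 \<le> real (card \<Sigma>) \<and> real (card \<Sigma>) \<le> C / \<epsilon> ^ 4 \<and>
         (\<forall>i\<ge>1. S i \<in> \<Sigma>) \<and>
         (\<forall>i j k. 0 < i \<and> i < j \<and> j < k \<longrightarrow>
            real (ED (substr S i j) (substr S j k)) > (1 - \<epsilon>) * real (k - i))))"
proof (rule exI[of _ 512], rule exI[of _ 8192], intro conjI allI impI)
  fix \<epsilon> :: real assume e: "0 < \<epsilon> \<and> \<epsilon> < 1"
  define r where "r = nat \<lceil>1 / \<epsilon>\<rceil>"
  have c1: "1 / \<epsilon> \<le> real r" unfolding r_def by linarith
  have c2: "real r \<le> 2 / \<epsilon>"
  proof -
    have "real r = real_of_int \<lceil>1 / \<epsilon>\<rceil>" unfolding r_def using e by simp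
    then have "real r \<le> 1 / \<epsilon> + 1" using of_int_ceiling_le_add_one[of "1/\<epsilon>"] by linarith
    moreover have "1 < 1 / \<epsilon>" using e by (simp add: field_simps)
    ultimately show ?thesis by (simp add: field_simps)
  qed
  have r: "r > 0" using c1 e by (metis less_le_trans of_nat_0_less_iff zero_less_divide_1_iff)
  have re: "1 \<le> real r * \<epsilon>" using c1 e by (simp add: field_simps)
  show "\<exists>(\<Sigma>::nat set) (S::nat \<Rightarrow> nat).
         finite \<Sigma> \<and>
         512 / \<epsilon> ^ 4 \<le> real (card \<Sigma>) \<and> real (card \<Sigma>) \<le> 8192 / \<epsilon> ^ 4 \<and>
         (\<forall>i\<ge>1. S i \<in> \<Sigma>) \<and>
         (\<forall>i j k. 0 < i \<and> i < j \<and> j < k \<longrightarrow>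
            real (ED (substr S i j) (substr S j k)) > (1 - \<epsilon>) * real (k - i))"
  proof (intro exI[of _ "{0..<qq r}"] exI[of _ "\<lambda>i. Tseq r (i - 1)"] conjI allI impI)
    have cq: "real (card {0..<qq r}) = 512 * real r ^ 4" unfolding qq_def by simp
    have "(1 / \<epsilon>) ^ 4 \<le> real r ^ 4" using c1 e by (intro power_mono) auto
    then show "512 / \<epsilon> ^ 4 \<le> real (card {0..<qq r})" unfolding cq by (simp add: power_divide)
    have "real r ^ 4 \<le> (2 / \<epsilon>) ^ 4" using c2 by (intro power_mono) auto
    then show "real (card {0..<qq r}) \<le> 8192 / \<epsilon> ^ 4" unfolding cq by (simp add: power_divide)
    show "Tseq r (i - 1) \<in> {0..<qq r}" if "1 \<le> i" for i using T_range[OF r] by simp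
    show "finite {0..<qq r}" by simp
    show "real (ED (substr (\<lambda>i. Tseq r (i - 1)) i j) (substr (\<lambda>i. Tseq r (i - 1)) j k)) > (1 - \<epsilon>) * real (k - i)"
      if "0 < i \<and> i < j \<and> j < k" for i j k
      using sync_main[of \<epsilon> r i j k] e r re that by auto
  qed
qed simp_all

end
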